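(* Let $W\in\mathbb{D}_n$ be a nonsingular Dale matrix satisfying the Ground Assumption with $\|W\|_F=\sqrt{\mathrm{trace}(W^TW)}<1$. Then for every $b\in\mathbb{R}^n_{\ge0}$ the network $(W,b)$ has a unique fixed point, and it is globally exponentially stable; in particular every fixed point is asymptotically stable. Moreover $\mathcal{C}(W)=\mathcal{SC}(W)=\mathrm{code}(G_\mathcal{E},\mathcal{E_U})$.
   Context: Threshold-linear network: $\dot x_i=-x_i+[\sum_j W_{ij}x_j+b_i]_+$ with $[y]_+=\max(0,y)$; a fixed point is $x^*$ with $x^*=[Wx^*+b]_+$. A Dale matrix $W\in\mathbb{D}_n$ is an $n\times n$ real matrix with a partition $[n]=\mathcal{E}\sqcup\mathcal{I}$ such that $W_{ii}=0$, $W_{ji}\ge0$ for all $j$ if $i\in\mathcal{E}$, $W_{ji}\le 0$ for all $j$ if $i\in\mathcal{I}$. Ground Assumption: $(I-W)_\sigma$ nonsingular for every nonempty $\sigma\subset[n]$. Excitatory support: $\mathrm{supp}_+x=\{i\in\mathcal{E}:x_i>0\}$. Combinatorial code: $\mathcal{C}(W)=\{\mathrm{supp}_+x^*: b\in\mathbb{R}^n_{\ge0},\ x^*\in\mathbb{R}^n_{\ge0}\text{ a fixed point of }(W,b)\}$. Stable combinatorial code: $\mathcal{SC}(W)=\{\mathrm{supp}_+x^*: b\in\mathbb{R}^n_{\ge0},\ x^*\in\mathbb{R}^n_{\ge0}\text{ an asymptotically stable fixed point of }(W,b)\}$. $G_\mathcal{E}$: directed graph on $\mathcal{E}$ with arc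 $i\to j$ iff $i\ne j$ and $W_{ji}>0$. $\mathcal{E_U}=\{j\in\mathcal{E}:W_{ji}=0\ \forall i\in\mathcal{I}\}$. $N^+_G(\sigma)=\bigcup_{i\in\sigma}\{j: i\to j\}$, and $\mathrm{code}(G,U)=\{\sigma\subset\mathcal{E}: N^+_G(\sigma)\cap U\subset\sigma\}$. *)

theory Defs
  imports "HOL-Analysis.Analysis"
begin

text \<open>Index set [n] is the finite type 'n. Matrices: W $ j $ i is the entry in row j, column i,
  so (W *v x) $ j = sum_i W $ j $ i * x $ i.\<close>

definition relu :: "real^'n \<Rightarrow> real^'n" where
  "relu v = (\<chi> i. max 0 (v $ i))"

definition tln_field :: "real^'n^'n \<Rightarrow> real^'n \<Rightarrow> real^'n \<Rightarrow> real^'n" where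
  "tln_field W b x = - x + relu (W *v x + b)"

definition is_fixed_point :: "real^'n^'n \<Rightarrow> real^'n \<Rightarrow> real^'n \<Rightarrow> bool" where
  "is_fixed_point W b x \<longleftrightarrow> x = relu (W *v x + b)"

definition is_trajectory :: "real^'n^'n \<Rightarrow> real^'n \<Rightarrow> (real \<Rightarrow> real^'n) \<Rightarrow> bool" where
  "is_trajectory W b x \<longleftrightarrow>
     (\<forall>t\<ge>0. (x has_vector_derivative tln_field W b (x t)) (at t within {0..}))"

definition lyapunov_stable :: "real^'n^'n \<Rightarrow> real^'n \<Rightarrow> real^'n \<Rightarrow> bool" where
  "lyapunov_stable W b xs \<longleftrightarrow>
     (\<forall>\<epsilon>>0. \<exists>\<delta>>0. \<forall>x. is_trajectory W b x \<and> norm (x 0 - xs) < \<delta> \<longrightarrow>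
        (\<forall>t\<ge>0. norm (x t - xs) < \<epsilon>))"

definition attractive :: "real^'n^'n \<Rightarrow> real^'n \<Rightarrow> real^'n \<Rightarrow> bool" where
  "attractive W b xs \<longleftrightarrow>
     (\<exists>\<delta>>0. \<forall>x. is_trajectory W b x \<and> norm (x 0 - xs) < \<delta> \<longrightarrow> (x \<longlongrightarrow> xs) at_top)"

definition asymptotically_stable :: "real^'n^'n \<Rightarrow> real^'n \<Rightarrow> real^'n \<Rightarrow> bool" where
  "asymptotically_stable W b xs \<longleftrightarrow>
     is_fixed_point W b xs \<and> lyapunov_stable W b xs \<and> attractive W b xs"

definition globally_exponentially_stable :: "real^'n^'n \<Rightarrow> real^'n \<Rightarrow> real^'n \<Rightarrow> bool" where
  "globally_exponentially_stable W b xs \<longleftrightarrow>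
     is_fixed_point W b xs \<and>
     (\<exists>k>0. \<exists>c>0. \<forall>x. is_trajectory W b x \<longrightarrow>
        (\<forall>t\<ge>0. norm (x t - xs) \<le> k * exp (- c * t) * norm (x 0 - xs)))"

text \<open>Dale matrix with excitatory set E (inhibitory set is the complement - E).\<close>
definition dale :: "real^'n^'n \<Rightarrow> 'n set \<Rightarrow> bool" where
  "dale W E \<longleftrightarrow> (\<forall>i. W $ i $ i = 0) \<and>
     (\<forall>i\<in>E. \<forall>j. W $ j $ i \<ge> 0) \<and> (\<forall>i\<in>-E. \<forall>j. W $ j $ i \<le> 0)"

text \<open>(I - W)_\<sigma> nonsingular: the principal submatrix indexed by \<sigma> has trivial kernel.\<close>
definition principal_nonsingular :: "real^'n^'n \<Rightarrow> 'n set \<Rightarrow> bool" where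
  "principal_nonsingular A \<sigma> \<longleftrightarrow>
     (\<forall>x::real^'n. (\<forall>i. i \<notin> \<sigma> \<longrightarrow> x $ i = 0) \<and> (\<forall>i\<in>\<sigma>. (A *v x) $ i = 0) \<longrightarrow> x = 0)"

definition ground_assumption :: "real^'n^'n \<Rightarrow> bool" where
  "ground_assumption W \<longleftrightarrow> (\<forall>\<sigma>. \<sigma> \<noteq> {} \<longrightarrow> principal_nonsingular (mat 1 - W) \<sigma>)"

definition frobenius_norm :: "real^'n^'n \<Rightarrow> real" where
  "frobenius_norm W = sqrt (trace (transpose W ** W))"

definition nonneg_vec :: "real^'n \<Rightarrow> bool" where
  "nonneg_vec v \<longleftrightarrow> (\<forall>i. v $ i \<ge> 0)"

definition supp_plus :: "'n set \<Rightarrow> real^'n \<Rightarrow> 'n set" where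
  "supp_plus E x = {i\<in>E. x $ i > 0}"

definition comb_code :: "real^'n^'n \<Rightarrow> 'n set \<Rightarrow> 'n set set" where
  "comb_code W E = {supp_plus E x | b x. nonneg_vec b \<and> nonneg_vec x \<and> is_fixed_point W b x}"

definition stable_comb_code :: "real^'n^'n \<Rightarrow> 'n set \<Rightarrow> 'n set set" where
  "stable_comb_code W E =
     {supp_plus E x | b x. nonneg_vec b \<and> nonneg_vec x \<and> asymptotically_stable W b x}"

definition GE_arc :: "real^'n^'n \<Rightarrow> 'n set \<Rightarrow> 'n \<Rightarrow> 'n \<Rightarrow> bool" where
  "GE_arc W E i j \<longleftrightarrow> i \<in> E \<and> j \<in> E \<and> i \<noteq> j \<and> W $ j $ i > 0"

definition E_U :: "real^'n^'n \<Rightarrow> 'n set \<Rightarrow> 'n set" where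
  "E_U W E = {j\<in>E. \<forall>i\<in>-E. W $ j $ i = 0}"

definition out_nbhd :: "('n \<Rightarrow> 'n \<Rightarrow> bool) \<Rightarrow> 'n set \<Rightarrow> 'n set" where
  "out_nbhd G \<sigma> = (\<Union>i\<in>\<sigma>. {j. G i j})"

definition graph_code :: "('n \<Rightarrow> 'n \<Rightarrow> bool) \<Rightarrow> 'n set \<Rightarrow> 'n set \<Rightarrow> 'n set set" where
  "graph_code G E U = {\<sigma>. \<sigma> \<subseteq> E \<and> out_nbhd G \<sigma> \<inter> U \<subseteq> \<sigma>}"

end

theory Submission
  imports Defs
begin


lemma normsq_vec: "(norm (x::real^'n))^2 = (\<Sum>i\<in>UNIV. (x$i)^2)"
  by (simp add: norm_vec_def L2_set_def sum_nonneg)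

lemma trace_TW: "trace (transpose W ** W) = (\<Sum>k\<in>UNIV. (norm ((W::real^'n^'n) $ k))^2)"
proof -
  have "trace (transpose W ** W) = (\<Sum>i\<in>UNIV. \<Sum>k\<in>UNIV. (W$k$i)^2)"
    by (simp add: trace_def matrix_matrix_mult_def transpose_def power2_eq_square)
  also have "\<dots> = (\<Sum>k\<in>UNIV. \<Sum>i\<in>UNIV. (W$k$i)^2)" by (rule sum.swap)
  also have "\<dots> = (\<Sum>k\<in>UNIV. (norm (W $ k))^2)" by (simp add: normsq_vec)
  finally show ?thesis .
qed

lemma frob_nonneg: "frobenius_norm W \<ge> 0"
  unfolding frobenius_norm_def trace_TW by (simp add: sum_nonneg)

lemma frob_bound: "norm ((W::real^'n^'n) *v v) \<le> frobenius_norm W * norm v"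
proof -
  have "(norm (W *v v))^2 = (\<Sum>j\<in>UNIV. (W$j \<bullet> v)^2)"
    by (simp add: normsq_vec matrix_vector_mult_def inner_vec_def)
  also have "\<dots> \<le> (\<Sum>j\<in>UNIV. (norm (W$j))^2 * (norm v)^2)"
  proof (rule sum_mono)
    fix j
    have "\<bar>W$j \<bullet> v\<bar> \<le> norm (W$j) * norm v" by (rule Cauchy_Schwarz_ineq2)
    hence "\<bar>W$j \<bullet> v\<bar>^2 \<le> (norm (W$j) * norm v)^2"
      by (rule power_mono) simp
    thus "(W$j \<bullet> v)^2 \<le> (norm (W$j))^2 * (norm v)^2" by (simp add: power_mult_distrib)
  qed
  also have "\<dots> = (frobenius_norm W * norm v)^2"
    by (simp add: frobenius_norm_def trace_TW power_mult_distrib sum_distrib_right sum_nonneg)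
  finally show ?thesis
    by (rule power2_le_imp_le) (simp add: frob_nonneg)
qed

lemma relu_lip: "norm (relu u - relu v) \<le> norm (u - v)"
  unfolding norm_vec_def relu_def
  by (rule L2_set_mono) (auto simp: abs_le_iff max_def)



lemma contraction:
  assumes "frobenius_norm W < 1"
  shows "\<exists>!x. is_fixed_point W b x"
proof -
  have "\<exists>!x. relu (W *v x + b) = x"
  proof (rule banach_fix_type[of "frobenius_norm W"])
    show "0 \<le> frobenius_norm W" by (rule frob_nonneg)
    show "frobenius_norm W < 1" by fact
    show "\<forall>x y. dist (relu (W *v x + b)) (relu (W *v y + b)) \<le> frobenius_norm W * dist x y"
    proof (intro allI)
      fix x y :: "real^'a"
      have "dist (relu (W *v x + b)) (relu (W *v y + b)) \<le> norm ((W *v x + b) - (W *v y + b))"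
        unfolding dist_norm by (rule relu_lip)
      also have "\<dots> = norm (W *v (x - y))" by (simp add: matrix_vector_mult_diff_distrib)
      also have "\<dots> \<le> frobenius_norm W * dist x y" unfolding dist_norm by (rule frob_bound)
      finally show "dist (relu (W *v x + b)) (relu (W *v y + b)) \<le> frobenius_norm W * dist x y" .
    qed
  qed
  thus ?thesis unfolding is_fixed_point_def by metis
qed

lemma inner_field_bound:
  assumes "is_fixed_point W b xs"
  shows "(y - xs) \<bullet> tln_field W b y \<le> (frobenius_norm W - 1) * (norm (y - xs))^2"
proof -
  let ?r = "relu (W *v y + b) - relu (W *v xs + b)"
  have F: "tln_field W b y = - (y - xs) + ?r"
    using assms unfolding tln_field_def is_fixed_point_def by (metis (no_types, lifting) add_diff_cancel_left' add_uminus_conv_diff diff_add_eq diff_diff_eq2 minus_diff_eq)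
  have "norm ?r \<le> norm ((W *v y + b) - (W *v xs + b))" by (rule relu_lip)
  also have "\<dots> = norm (W *v (y - xs))" by (simp add: matrix_vector_mult_diff_distrib)
  also have "\<dots> \<le> frobenius_norm W * norm (y - xs)" by (rule frob_bound)
  finally have r: "norm ?r \<le> frobenius_norm W * norm (y - xs)" .
  have "(y - xs) \<bullet> ?r \<le> norm (y - xs) * norm ?r" by (rule norm_cauchy_schwarz)
  also have "\<dots> \<le> norm (y - xs) * (frobenius_norm W * norm (y - xs))"
    by (rule mult_left_mono[OF r]) simp
  finally have "(y - xs) \<bullet> ?r \<le> frobenius_norm W * (norm (y - xs))^2"
    by (simp add: power2_eq_square mult_ac)
  thus ?thesis unfolding F by (simp add: inner_add_right power2_norm_eq_inner algebra_simps)
qed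

lemma ges_bound:
  assumes q: "frobenius_norm W < 1" and fp: "is_fixed_point W b xs"
   and tr: "is_trajectory W b x" and t0: "(0::real) \<le> t"
  shows "norm (x t - xs) \<le> 1 * exp (- (1 - frobenius_norm W) * t) * norm (x 0 - xs)"
proof -
  define c where "c = 1 - frobenius_norm W"
  define F where "F = (\<lambda>s. tln_field W b (x s))"
  define g where "g = (\<lambda>s. exp (2 * c * s) * ((x s - xs) \<bullet> (x s - xs)))"
  define g' where "g' = (\<lambda>s. 2 * c * exp (2 * c * s) * ((x s - xs) \<bullet> (x s - xs))
        + exp (2 * c * s) * ((x s - xs) \<bullet> F s + F s \<bullet> (x s - xs)))"
  have dx: "(x has_vector_derivative F s) (at s within {0..})" if "s \<ge> 0" for s
    using tr that unfolding is_trajectory_def F_def by blast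
  have cont: "continuous_on {0..t} x"
  proof -
    have "continuous_on {0..} x"
      unfolding continuous_on_eq_continuous_within
      using dx has_vector_derivative_continuous by (metis atLeast_iff)
    thus ?thesis by (rule continuous_on_subset) auto
  qed
  have gcont: "continuous_on {0..t} g"
    unfolding g_def by (intro continuous_intros cont)
  have dg: "(g has_real_derivative g' s) (at s)" if "s > 0" for s
  proof -
    have xd: "(x has_vector_derivative F s) (at s)"
      using dx[of s] that at_within_interior[of s "{0..}"] by simp
    have "((\<lambda>s. x s - xs) has_vector_derivative F s) (at s)"
      using has_vector_derivative_diff[OF xd has_vector_derivative_const[of xs]] by simp
    hence ed: "((\<lambda>s. x s - xs) has_derivative (\<lambda>h. h *\<^sub>R F s)) (at s)"
      unfolding has_vector_derivative_def .
    have "((\<lambda>s. (x s - xs) \<bullet> (x s - xs)) has_derivative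
        (\<lambda>h. (x s - xs) \<bullet> (h *\<^sub>R F s) + (h *\<^sub>R F s) \<bullet> (x s - xs))) (at s)"
      by (rule has_derivative_inner[OF ed ed])
    hence "((\<lambda>s. (x s - xs) \<bullet> (x s - xs)) has_real_derivative
        ((x s - xs) \<bullet> F s + F s \<bullet> (x s - xs))) (at s)"
      unfolding has_field_derivative_def
      by (rule has_derivative_eq_rhs) (auto simp: algebra_simps fun_eq_iff)
    hence "((\<lambda>s. exp (2 * c * s) * ((x s - xs) \<bullet> (x s - xs))) has_real_derivative
        (exp (2 * c * s) * (2 * c)) * ((x s - xs) \<bullet> (x s - xs)) + exp (2 * c * s) * ((x s - xs) \<bullet> F s + F s \<bullet> (x s - xs))) (at s)"
    proof -
      have exd: "((\<lambda>s. exp (2 * c * s)) has_real_derivative exp (2 * c * s) * (2 * c)) (at s)"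
        by (auto intro!: derivative_eq_intros)
      show ?thesis
        by (rule DERIV_cong[OF DERIV_mult[OF exd \<open>((\<lambda>s. (x s - xs) \<bullet> (x s - xs)) has_real_derivative _) _\<close>]]) (simp add: algebra_simps)
    qed
    thus ?thesis unfolding g_def g'_def by (simp add: mult_ac)
  qed
  have g'np: "g' s \<le> 0" if "s \<ge> 0" for s
  proof -
    have b: "(x s - xs) \<bullet> F s \<le> (frobenius_norm W - 1) * (norm (x s - xs))^2"
      unfolding F_def by (rule inner_field_bound[OF fp])
    have "g' s = exp (2 * c * s) * (2 * c * (norm (x s - xs))^2 + 2 * ((x s - xs) \<bullet> F s))"
      unfolding g'_def by (simp add: power2_norm_eq_inner inner_commute algebra_simps)
    also have "\<dots> \<le> exp (2 * c * s) * 0"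
      using b unfolding c_def by (intro mult_left_mono) (auto simp: algebra_simps)
    finally show ?thesis by simp
  qed
  have gle: "g t \<le> g 0"
  proof (cases "t = 0")
    case False
    hence "0 < t" using t0 by simp
    from MVT[OF this gcont] obtain l z where z: "0 < z" "z < t" "(g has_real_derivative l) (at z)"
        "g t - g 0 = (t - 0) * l"
      using dg real_differentiable_def by meson
    have "l = g' z" using DERIV_unique[OF z(3) dg[OF z(1)]] .
    hence "l \<le> 0" using g'np[of z] z by simp
    hence "t * l \<le> 0" using t0 by (simp add: mult_nonneg_nonpos)
    thus ?thesis using z(4) by simp
  qed simp
  have "exp (2 * c * t) * (norm (x t - xs))^2 \<le> (norm (x 0 - xs))^2"
    using gle unfolding g_def by (simp add: power2_norm_eq_inner)
  hence "(norm (x t - xs))^2 \<le> exp (-(2 * c * t)) * (norm (x 0 - xs))^2"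
    by (simp add: exp_minus field_simps)
  also have "\<dots> = (exp (- c * t) * norm (x 0 - xs))^2"
    by (simp add: power_mult_distrib flip: exp_of_nat_mult)
  finally have "norm (x t - xs) \<le> exp (- c * t) * norm (x 0 - xs)"
    by (rule power2_le_imp_le) simp
  thus "norm (x t - xs) \<le> 1 * exp (- (1 - frobenius_norm W) * t) * norm (x 0 - xs)"
    unfolding c_def by simp
qed

lemma ges:
  assumes q: "frobenius_norm W < 1" and fp: "is_fixed_point W b xs"
  shows "globally_exponentially_stable W b xs"
  unfolding globally_exponentially_stable_def
  using fp ges_bound[OF q fp] q by (metis diff_gt_0_iff_gt zero_less_one)



lemma exp_lim0: "(c::real) > 0 \<Longrightarrow> ((\<lambda>t. exp (- c * t) * K) \<longlongrightarrow> 0) at_top"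
proof -
  assume c: "c > 0"
  have "filterlim (\<lambda>t. - c * t) at_bot at_top"
    using c by (simp add: filterlim_at_bot_mirror filterlim_tendsto_pos_mult_at_top[OF tendsto_const c filterlim_ident] filterlim_uminus_at_bot)
  hence "((\<lambda>t. exp (- c * t)) \<longlongrightarrow> 0) at_top"
    by (rule filterlim_compose[OF exp_at_bot])
  thus ?thesis by (rule tendsto_mult_left_zero)
qed

lemma asym_stable:
  assumes q: "frobenius_norm W < 1" and fp: "is_fixed_point W b xs"
  shows "asymptotically_stable W b xs"
proof -
  define c where "c = 1 - frobenius_norm W"
  have c: "c > 0" using q unfolding c_def by simp
  have B: "norm (x t - xs) \<le> exp (- c * t) * norm (x 0 - xs)"
    if "is_trajectory W b x" "t \<ge> 0" for x t
    using ges_bound[OF q fp that] unfolding c_def by simp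
  have L: "lyapunov_stable W b xs"
    unfolding lyapunov_stable_def
  proof (intro allI impI exI[of _ "\<lambda>e. e"])
    fix \<epsilon> :: real assume e: "\<epsilon> > 0"
    show "\<exists>\<delta>>0. \<forall>x. is_trajectory W b x \<and> norm (x 0 - xs) < \<delta> \<longrightarrow> (\<forall>t\<ge>0. norm (x t - xs) < \<epsilon>)"
    proof (intro exI[of _ \<epsilon>] conjI allI impI)
      fix x and t :: real assume h: "is_trajectory W b x \<and> norm (x 0 - xs) < \<epsilon>" and t: "t \<ge> 0"
      have "exp (- c * t) \<le> 1" using c t by simp
      hence "exp (- c * t) * norm (x 0 - xs) \<le> 1 * norm (x 0 - xs)"
        by (intro mult_right_mono) auto
      thus "norm (x t - xs) < \<epsilon>" using B[of x t] h t by simp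
    qed (use e in simp)
  qed
  have A: "attractive W b xs"
    unfolding attractive_def
  proof (intro exI[of _ 1] conjI allI impI)
    fix x assume h: "is_trajectory W b x \<and> norm (x 0 - xs) < 1"
    have lim0: "((\<lambda>t. exp (- c * t) * norm (x 0 - xs)) \<longlongrightarrow> 0) at_top"
      using c by (rule exp_lim0)
    have "((\<lambda>t. x t - xs) \<longlongrightarrow> 0) at_top"
    proof (rule Lim_null_comparison[OF _ lim0])
      show "\<forall>\<^sub>F t in at_top. norm (x t - xs) \<le> exp (- c * t) * norm (x 0 - xs)"
        using eventually_ge_at_top[of "0::real"] by (rule eventually_mono) (use B h in blast)
    qed
    thus "(x \<longlongrightarrow> xs) at_top" using Lim_null by blast
  qed simp
  show ?thesis unfolding asymptotically_stable_def using fp L A by simp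
qed



lemma mv_nth: "(W *v x) $ j = (\<Sum>k\<in>UNIV. W$j$k * x$k)"
  by (simp add: matrix_vector_mult_def)

lemma relu_nth: "relu v $ i = max 0 (v $ i)"
  by (simp add: relu_def)

lemma fp_nonneg: "is_fixed_point W b x \<Longrightarrow> x $ i \<ge> 0"
  unfolding is_fixed_point_def by (metis relu_nth max.cobounded1)

lemma code_sub_graph:
  assumes D: "dale W E" and b: "nonneg_vec b" and fp: "is_fixed_point W b x"
  shows "supp_plus E x \<in> graph_code (GE_arc W E) E (E_U W E)"
proof -
  let ?\<sigma> = "supp_plus E x"
  have "out_nbhd (GE_arc W E) ?\<sigma> \<inter> E_U W E \<subseteq> ?\<sigma>"
  proof
    fix j assume "j \<in> out_nbhd (GE_arc W E) ?\<sigma> \<inter> E_U W E"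
    then obtain i where i: "i \<in> ?\<sigma>" "GE_arc W E i j" and jU: "j \<in> E_U W E"
      unfolding out_nbhd_def by auto
    have jE: "j \<in> E" and inh: "\<forall>k\<in>-E. W$j$k = 0" using jU unfolding E_U_def by auto
    have nn: "\<forall>k\<in>UNIV - {i}. 0 \<le> W$j$k * x$k"
    proof
      fix k assume "k \<in> UNIV - {i}"
      show "0 \<le> W$j$k * x$k"
      proof (cases "k \<in> E")
        case True
        hence "W$j$k \<ge> 0" using D unfolding dale_def by blast
        thus ?thesis using fp_nonneg[OF fp] by simp
      next
        case False thus ?thesis using inh by simp
      qed
    qed
    have "W$j$i * x$i \<le> (\<Sum>k\<in>UNIV. W$j$k * x$k)"
      by (rule member_le_sum) (use nn in auto)
    moreover have "W$j$i * x$i > 0"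
      using i unfolding GE_arc_def supp_plus_def by simp
    ultimately have "(W *v x)$j > 0" by (simp add: mv_nth)
    hence "(W *v x + b)$j > 0" using b unfolding nonneg_vec_def
      by (metis add_pos_nonneg vector_add_component)
    hence "x$j > 0" using fp unfolding is_fixed_point_def
      by (metis max.strict_coboundedI2 relu_nth)
    thus "j \<in> ?\<sigma>" using jE unfolding supp_plus_def by simp
  qed
  thus ?thesis unfolding graph_code_def supp_plus_def by auto
qed



lemma graph_sub_code:
  assumes D: "dale W E" and q: "frobenius_norm W < 1"
    and G: "\<sigma> \<in> graph_code (GE_arc W E) E (E_U W E)"
  shows "\<exists>b x. nonneg_vec b \<and> nonneg_vec x \<and> is_fixed_point W b x \<and> supp_plus E x = \<sigma>"
proof -
  have sE: "\<sigma> \<subseteq> E" and cl: "out_nbhd (GE_arc W E) \<sigma> \<inter> E_U W E \<subseteq> \<sigma>"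
    using G unfolding graph_code_def by auto
  have Epos: "W$j$k \<ge> 0" if "k \<in> E" for j k using D that unfolding dale_def by blast
  have Ineg: "W$j$k \<le> 0" if "k \<notin> E" for j k using D that unfolding dale_def by blast
  define W' where "W' = (\<chi> i j. if i \<in> \<sigma> \<and> j \<in> \<sigma> then W$i$j else 0)"
  have "frobenius_norm W' \<le> frobenius_norm W"
  proof -
    have "(\<Sum>k\<in>UNIV. (norm (W' $ k))^2) \<le> (\<Sum>k\<in>UNIV. (norm (W $ k))^2)"
      unfolding normsq_vec
      by (intro sum_mono) (simp add: W'_def)
    thus ?thesis unfolding frobenius_norm_def trace_TW by simp
  qed
  hence q': "frobenius_norm W' < 1" using q by simp
  define c :: "real^_" where "c = (\<chi> i. if i \<in> \<sigma> then 1 else 0)"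
  obtain y where fy: "is_fixed_point W' c y" using contraction[OF q'] by blast
  have y0: "y$i \<ge> 0" for i by (rule fp_nonneg[OF fy])
  have yeq: "y$i = max 0 ((W' *v y)$i + c$i)" for i
    using fy unfolding is_fixed_point_def by (metis relu_nth vector_add_component)
  have ynot: "y$j = 0" if "j \<notin> \<sigma>" for j
  proof -
    have "(W' *v y)$j = 0" using that by (simp add: mv_nth W'_def)
    thus ?thesis using yeq[of j] that by (simp add: c_def)
  qed
  have Wy: "(W *v y)$i = (W' *v y)$i" if "i \<in> \<sigma>" for i
    unfolding mv_nth
    by (rule sum.cong) (use that ynot in \<open>auto simp: W'_def\<close>)
  have W'y0: "(W' *v y)$i \<ge> 0" for i
    unfolding mv_nth
    by (rule sum_nonneg) (use sE y0 Epos in \<open>auto simp: W'_def intro!: mult_nonneg_nonneg\<close>)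
  have yin: "y$i = (W *v y)$i + 1" if "i \<in> \<sigma>" for i
    using yeq[of i] W'y0[of i] that Wy[OF that] by (simp add: c_def)
  define A where "A j = (W *v y)$j" for j
  define \<delta> where "\<delta> j = - (\<Sum>k\<in>-E. W$j$k)" for j
  define M where "M = 1 + (\<Sum>j\<in>UNIV. \<bar>A j\<bar> + \<bar>A j\<bar> / \<delta> j)"
  have \<delta>0: "\<delta> j \<ge> 0" for j 
  proof -
    have "(\<Sum>k\<in>-E. W$j$k) \<le> 0" by (rule sum_nonpos) (use Ineg in auto)
    thus ?thesis by (simp add: \<delta>_def)
  qed
  have tn: "0 \<le> \<bar>A j\<bar> + \<bar>A j\<bar> / \<delta> j" for j using \<delta>0[of j] by simp
  have Mge: "\<bar>A j\<bar> + \<bar>A j\<bar> / \<delta> j \<le> M - 1" for j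
    unfolding M_def using member_le_sum[of j UNIV "\<lambda>j. \<bar>A j\<bar> + \<bar>A j\<bar> / \<delta> j"] tn by simp
  have Mpos: "M \<ge> 1" unfolding M_def using tn by (simp add: sum_nonneg)
  define x :: "real^_" where "x = (\<chi> i. y$i + (if i \<notin> E then M else 0))"
  have Wx: "(W *v x)$j = A j - M * \<delta> j" for j
  proof -
    have "(W *v x)$j = (\<Sum>k\<in>UNIV. W$j$k * y$k) + (\<Sum>k\<in>UNIV. W$j$k * (if k \<notin> E then M else 0))"
      by (simp add: mv_nth x_def distrib_left sum.distrib)
    also have "(\<Sum>k\<in>UNIV. W$j$k * (if k \<notin> E then M else 0)) = (\<Sum>k\<in>-E. W$j$k * M)"
      by (simp add: sum.If_cases if_distrib Compl_eq[symmetric] cong: if_cong)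
    also have "\<dots> = - M * \<delta> j"
    proof -
      have "(\<Sum>k\<in>-E. W$j$k * M) = M * (\<Sum>k\<in>-E. W$j$k)" by (simp add: sum_distrib_left mult.commute)
      thus ?thesis by (simp add: \<delta>_def)
    qed
    finally show ?thesis by (simp add: A_def mv_nth)
  qed
  define b :: "real^_" where "b = (\<chi> j. if x$j > 0 then x$j - (W *v x)$j else 0)"
  have x0: "x$i \<ge> 0" for i using y0[of i] Mpos by (simp add: x_def)
  have xpos_le: "(W *v x)$j \<le> x$j" if "x$j > 0" for j
  proof (cases "j \<in> E")
    case True
    hence "j \<in> \<sigma>" using that ynot[of j] by (auto simp: x_def)
    hence "x$j = A j + 1" using True yin by (simp add: x_def A_def)
    moreover have "M * \<delta> j \<ge> 0" using Mpos \<delta>0[of j] by simp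
    ultimately show ?thesis using Wx[of j] by simp
  next
    case False
    have "\<bar>A j\<bar> \<le> M" using Mge[of j] tn[of j] \<delta>0[of j]
      by (smt (verit) divide_nonneg_nonneg abs_ge_zero)
    moreover have "M * \<delta> j \<ge> 0" using Mpos \<delta>0[of j] by simp
    ultimately show ?thesis using Wx[of j] False y0[of j] by (simp add: x_def)
  qed
  have xzero_le: "(W *v x)$j \<le> 0" if "x$j = 0" for j
  proof -
    have jE: "j \<in> E" using that Mpos y0[of j] by (auto simp: x_def split: if_splits)
    have js: "j \<notin> \<sigma>" using that yin[of j] jE y0 W'y0 Wy
      by (smt (verit) x_def vec_lambda_beta)
    show ?thesis
    proof (cases "\<delta> j > 0")
      case True
      have "\<bar>A j\<bar> / \<delta> j \<le> M" using Mge[of j] by simp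
      hence "\<bar>A j\<bar> \<le> M * \<delta> j" using True by (simp add: divide_le_eq)
      thus ?thesis using Wx[of j] by simp
    next
      case False
      hence d0: "\<delta> j = 0" using \<delta>0[of j] by simp
      have "\<forall>k\<in>-E. W$j$k = 0"
      proof -
        have "(\<Sum>k\<in>-E. - W$j$k) = 0" using d0 unfolding \<delta>_def by (simp add: sum_negf)
        moreover have "\<forall>k\<in>-E. 0 \<le> - W$j$k" using Ineg by simp
        ultimately show ?thesis using sum_nonneg_eq_0_iff[of "-E" "\<lambda>k. - W$j$k"] by simp
      qed
      hence jU: "j \<in> E_U W E" using jE unfolding E_U_def by simp
      have "W$j$k = 0" if "k \<in> \<sigma>" for k
      proof (rule ccontr)
        assume "W$j$k \<noteq> 0"
        hence "W$j$k > 0" using Epos[of k j] sE that by force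
        hence "GE_arc W E k j" using sE that jE js unfolding GE_arc_def by auto
        hence "j \<in> out_nbhd (GE_arc W E) \<sigma>" using that unfolding out_nbhd_def by auto
        thus False using cl jU js by auto
      qed
      hence "A j = 0" unfolding A_def mv_nth
        by (intro sum.neutral) (use ynot in auto)
      thus ?thesis using Wx[of j] d0 by simp
    qed
  qed
  show ?thesis
  proof (intro exI conjI)
    show "nonneg_vec b" unfolding nonneg_vec_def b_def using xpos_le by simp
    show "nonneg_vec x" unfolding nonneg_vec_def using x0 by simp
    show "is_fixed_point W b x"
      unfolding is_fixed_point_def
    proof (rule vec_eq_iff[THEN iffD2], intro allI)
      fix j
      show "x$j = relu (W *v x + b) $ j"
      proof (cases "x$j > 0")
        case True thus ?thesis by (simp add: relu_nth b_def)
      next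
        case False
        hence "x$j = 0" using x0[of j] by simp
        thus ?thesis using xzero_le[of j] False by (simp add: relu_nth b_def)
      qed
    qed
    show "supp_plus E x = \<sigma>"
    proof -
      have "x$i > 0 \<longleftrightarrow> i \<in> \<sigma>" if "i \<in> E" for i
        using that yin[of i] ynot[of i] y0 W'y0 Wy by (smt (verit) x_def vec_lambda_beta)
      thus ?thesis unfolding supp_plus_def using sE by auto
    qed
  qed
qed


theorem mainTheorem5:
  fixes W :: "real^'n^'n" and E :: "'n set"
  assumes "dale W E"
    and "invertible W"
    and "ground_assumption W"
    and "frobenius_norm W < 1"
  shows "(\<forall>b. nonneg_vec b \<longrightarrow>
            (\<exists>!x. is_fixed_point W b x) \<and>
            (\<forall>x. is_fixed_point W b x \<longrightarrow> globally_exponentially_stable W b x) \<and>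
            (\<forall>x. is_fixed_point W b x \<longrightarrow> asymptotically_stable W b x))
       \<and> comb_code W E = stable_comb_code W E
       \<and> stable_comb_code W E = graph_code (GE_arc W E) E (E_U W E)"
proof -
  note D = assms(1) and q = assms(4)
  have P1: "\<forall>b. nonneg_vec b \<longrightarrow>
            (\<exists>!x. is_fixed_point W b x) \<and>
            (\<forall>x. is_fixed_point W b x \<longrightarrow> globally_exponentially_stable W b x) \<and>
            (\<forall>x. is_fixed_point W b x \<longrightarrow> asymptotically_stable W b x)"
    using contraction[OF q] ges[OF q] asym_stable[OF q] by blast
  have C1: "comb_code W E = stable_comb_code W E"
    unfolding comb_code_def stable_comb_code_def
    using asym_stable[OF q] unfolding asymptotically_stable_def by blast
  have C2: "stable_comb_code W E = graph_code (GE_arc W E) E (E_U W E)"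
  proof
    show "stable_comb_code W E \<subseteq> graph_code (GE_arc W E) E (E_U W E)"
      unfolding stable_comb_code_def asymptotically_stable_def
      using code_sub_graph[OF D] by blast
    show "graph_code (GE_arc W E) E (E_U W E) \<subseteq> stable_comb_code W E"
    proof
      fix \<sigma> assume "\<sigma> \<in> graph_code (GE_arc W E) E (E_U W E)"
      from graph_sub_code[OF D q this] obtain b x where
        h: "nonneg_vec b" "nonneg_vec x" "is_fixed_point W b x" "supp_plus E x = \<sigma>" by blast
      have "asymptotically_stable W b x" by (rule asym_stable[OF q h(3)])
      thus "\<sigma> \<in> stable_comb_code W E" unfolding stable_comb_code_def using h by blast
    qed
  qed
  show ?thesis using P1 C1 C2 by blast
qed

end
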